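(* There is a constant $c$, independent of $n$, such that for all integers $n\ge2$ the operator norm of $\mathcal I_n^*: C(\overline\Omega_H)\to C(\overline\Omega_H)$ with respect to the uniform norm satisfies $$\|\mathcal I_n^*\|_\infty\le c(\log n)^3 .$$
   Context: Let $\mathbb R^4_H=\{\mathbf t\in\mathbb R^4: t_1+t_2+t_3+t_4=0\}$, $\mathbb Z^4_H=\mathbb Z^4\cap\mathbb R^4_H$, $\Omega_H=\{\mathbf t\in\mathbb R^4_H: -1<t_i-t_j\le1,\ 1\le i<j\le4\}$ with closure $\overline\Omega_H$. Let $\mathbb H=\{\mathbf k\in\mathbb Z^4_H: k_1\equiv k_2\equiv k_3\equiv k_4\pmod4\}$, $\phi_{\mathbf k}(\mathbf t)=e^{\frac{\pi i}{2}\mathbf k\cdot\mathbf t}$, $\mathbb H_n^*=\{\mathbf k\in\mathbb H: -4n\le k_i-k_j\le4n,\ 1\le i<j\le4\}$. For $\mathbf k\in\mathbb H_n^*$, $c^{(n)}_{\mathbf k}=1$ if $\max_ik_i-\min_ik_i<4n$, and otherwise $c^{(n)}_{\mathbf k}=1/\binom{p+q}{p}$ where $p$ (resp. $q$) is the number of coordinates equal to $\max_ik_i$ (resp. $\min_ik_i$). Let $\Phi_n^*(\mathbf t)=\frac1{4n^3}\sum_{\mathbf k\in\mathbb H_n^*}c^{(n)}_{\mathbf k}\phi_{\mathbf k}(\mathbf t)$ and, for $f\in C(\overline\Omega_H)$, $\mathcal I_n^*f(\mathbf t)=\sum_{\mathbf j\in\mathbb H_n^*}f(\tfrac{\mathbf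 j}{4n})\Phi_n^*(\mathbf t-\tfrac{\mathbf j}{4n})$. *)

theory Defs
  imports "HOL-Analysis.Analysis"
begin

definition RH :: "(real^4) set" where
  "RH = {t. (\<Sum>i\<in>UNIV. t $ i) = 0}"

definition OmegaH :: "(real^4) set" where
  "OmegaH = {t \<in> RH. \<forall>i j. i < j \<longrightarrow> -1 < t $ i - t $ j \<and> t $ i - t $ j \<le> 1}"

definition Hlat :: "(int^4) set" where
  "Hlat = {k. (\<Sum>i\<in>UNIV. k $ i) = 0 \<and> (\<forall>i j. k $ i mod 4 = k $ j mod 4)}"

definition Hstar :: "nat \<Rightarrow> (int^4) set" where
  "Hstar n = {k \<in> Hlat. \<forall>i j. i < j \<longrightarrow>
      - 4 * int n \<le> k $ i - k $ j \<and> k $ i - k $ j \<le> 4 * int n}"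

definition cstar :: "nat \<Rightarrow> int^4 \<Rightarrow> real" where
  "cstar n k =
    (let M = Max (range (\<lambda>i. k $ i)); m = Min (range (\<lambda>i. k $ i));
         p = card {i. k $ i = M}; q = card {i. k $ i = m}
     in if M - m < 4 * int n then 1 else 1 / real ((p + q) choose p))"

definition phi :: "int^4 \<Rightarrow> real^4 \<Rightarrow> complex" where
  "phi k t = exp (\<i> * of_real (pi / 2 * (\<Sum>i\<in>UNIV. real_of_int (k $ i) * t $ i)))"

definition Phistar :: "nat \<Rightarrow> real^4 \<Rightarrow> complex" where
  "Phistar n t = of_real (1 / (4 * real n ^ 3)) * (\<Sum>k\<in>Hstar n. of_real (cstar n k) * phi k t)"

definition gridpt :: "nat \<Rightarrow> int^4 \<Rightarrow> real^4" where
  "gridpt n j = (\<chi> i. real_of_int (j $ i) / (4 * real n))"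

definition Istar :: "nat \<Rightarrow> (real^4 \<Rightarrow> complex) \<Rightarrow> real^4 \<Rightarrow> complex" where
  "Istar n f t = (\<Sum>j\<in>Hstar n. f (gridpt n j) * Phistar n (t - gridpt n j))"

end

theory Submission
  imports Defs
begin


definition CL :: "(real^4) set" where
  "CL = {t. (\<Sum>i\<in>UNIV. t $ i) = 0 \<and> (\<forall>i j. t $ i - t $ j \<le> 1)}"

lemma closed_CL: "closed CL"
  unfolding CL_def
  by (intro closed_Collect_conj closed_Collect_all closed_Collect_eq closed_Collect_le continuous_intros)

lemma Omega_sub_CL: "OmegaH \<subseteq> CL"
proof
  fix t assume t: "t \<in> OmegaH"
  have "t $ i - t $ j \<le> 1" for i j
  proof -
    have "i < j \<or> j < i \<or> i = j" by auto
    thus ?thesis using t unfolding OmegaH_def by force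
  qed
  thus "t \<in> CL" using t unfolding OmegaH_def RH_def CL_def by auto
qed

lemma CL_sub_closure: "CL \<subseteq> closure OmegaH"
proof
  fix t assume t: "t \<in> CL"
  show "t \<in> closure OmegaH"
    unfolding closure_approachable
  proof (intro allI impI)
    fix e :: real assume e: "e > 0"
    define d where "d = min (1/2) (e / (norm t + 1))"
    have "e / (norm t + 1) > 0" using e by (intro divide_pos_pos) (auto intro: add_nonneg_pos)
    hence d0: "d > 0" "d \<le> 1/2" unfolding d_def by linarith+
    have dn: "d * norm t < e"
    proof -
      have "d * norm t \<le> (e / (norm t + 1)) * norm t"
        by (intro mult_right_mono) (auto simp: d_def)
      also have "\<dots> < e"
      proof -
        have p: "norm t + 1 > 0" by (simp add: add_nonneg_pos)
        have "e * norm t < e * (norm t + 1)" using e by simp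
        thus ?thesis using p by (simp add: pos_divide_less_eq)
      qed
      finally show ?thesis .
    qed
    let ?y = "(1 - d) *\<^sub>R t"
    have "?y \<in> OmegaH"
    proof -
      have s: "(\<Sum>i\<in>UNIV. ?y $ i) = 0" using t
        by (simp add: CL_def sum_distrib_left[symmetric])
      have "-1 < ?y $ i - ?y $ j \<and> ?y $ i - ?y $ j \<le> 1" for i j
      proof -
        have a: "t $ i - t $ j \<le> 1" "t $ j - t $ i \<le> 1" using t by (auto simp: CL_def)
        have "?y $ i - ?y $ j = (1 - d) * (t $ i - t $ j)" by (simp add: algebra_simps)
        moreover have "(1 - d) * (t $ i - t $ j) \<le> (1-d) * 1"
          using a d0 by (intro mult_left_mono) auto
        moreover have "(1 - d) * (t $ j - t $ i) \<le> (1-d) * 1"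
          using a d0 by (intro mult_left_mono) auto
        ultimately show ?thesis using d0 by (auto simp: algebra_simps)
      qed
      thus ?thesis using s by (auto simp: OmegaH_def RH_def)
    qed
    moreover have "dist ?y t < e"
    proof -
      have "dist ?y t = norm (d *\<^sub>R t)" by (simp add: dist_norm algebra_simps)
      also have "\<dots> = d * norm t" using d0 by simp
      finally show ?thesis using dn by simp
    qed
    ultimately show "\<exists>y\<in>OmegaH. dist y t < e" by blast
  qed
qed

lemma closure_eq: "closure OmegaH = CL"
  using CL_sub_closure closure_minimal[OF Omega_sub_CL closed_CL] by blast

lemma CL_bound: assumes "t \<in> CL" shows "\<bar>t $ i\<bar> \<le> 1"
proof -
  have "(\<Sum>j\<in>UNIV. t $ i - t $ j) = 4 * t $ i"
    using assms by (simp add: CL_def sum_subtractf)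
  moreover have "\<bar>\<Sum>j\<in>UNIV. t $ i - t $ j\<bar> \<le> (\<Sum>j\<in>(UNIV::4 set). 1)"
    using assms by (intro order.trans[OF sum_abs] sum_mono) (auto simp: CL_def abs_le_iff)
  ultimately show ?thesis by simp
qed

lemma Hstar_pair: assumes "j \<in> Hstar n" shows "\<bar>j $ a - j $ b\<bar> \<le> 4 * int n"
proof -
  have "a < b \<or> b < a \<or> a = b" by auto
  thus ?thesis using assms unfolding Hstar_def by force
qed

lemma Hstar_bound: assumes "j \<in> Hstar n" shows "\<bar>j $ i\<bar> \<le> 4 * int n"
proof -
  have "(\<Sum>l\<in>UNIV. j $ i - j $ l) = 4 * j $ i"
    using assms by (simp add: Hstar_def Hlat_def sum_subtractf)
  moreover have "\<bar>\<Sum>l\<in>UNIV. j $ i - j $ l\<bar> \<le> (\<Sum>l\<in>(UNIV::4 set). 4 * int n)"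
    using Hstar_pair[OF assms] by (intro order.trans[OF sum_abs] sum_mono) auto
  ultimately show ?thesis by simp
qed

lemma grid_CL: assumes "j \<in> Hstar n" "n > 0" shows "gridpt n j \<in> CL"
proof -
  have "(\<Sum>i\<in>UNIV. real_of_int (j $ i)) = 0"
    using assms by (simp add: Hstar_def Hlat_def flip: of_int_sum)
  hence s: "(\<Sum>i\<in>UNIV. real_of_int (j $ i) / (4 * real n)) = 0"
    by (simp add: sum_divide_distrib[symmetric])
  have "real_of_int (j $ a) / (4 * real n) - real_of_int (j $ b) / (4 * real n) \<le> 1" for a b
  proof -
    have "real_of_int (j $ a - j $ b) \<le> 4 * real n" using Hstar_pair[OF assms(1), of a b] by linarith
    thus ?thesis using assms(2) by (simp add: field_simps)
  qed
  thus ?thesis using s by (simp add: CL_def gridpt_def)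
qed



definition E :: "int \<Rightarrow> real \<Rightarrow> complex" where
  "E a x = exp (\<i> * of_real (2 * pi * real_of_int a * x))"

definition u :: "int set \<Rightarrow> real \<Rightarrow> real" where
  "u S x = norm (\<Sum>a\<in>S. E a x)"

lemma u_nonneg: "0 \<le> u S x" by (simp add: u_def)

lemma u_single: "u {c} x = 1" by (simp add: u_def E_def)

lemma sin_lb: fixes x :: real assumes "0 \<le> x" "x \<le> 2" shows "x / 3 \<le> sin x"
proof -
  have "\<bar>sin x - (\<Sum>m<3. sin_coeff m * x ^ m)\<bar> \<le> inverse (fact 3) * \<bar>x\<bar> ^ 3"
    by (rule Maclaurin_sin_bound)
  moreover have "(\<Sum>m<3. sin_coeff m * x ^ m) = x"
    by (simp add: numeral_3_eq_3 sin_coeff_def)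
  moreover have "\<bar>x\<bar> ^ 3 \<le> 4 * x"
  proof -
    have "x ^ 3 = x * x\<^sup>2" by (simp add: power3_eq_cube power2_eq_square)
    also have "\<dots> \<le> x * 4" using assms by (intro mult_left_mono) (auto simp: power2_eq_square intro: mult_mono[of x 2 x 2, simplified])
    finally show ?thesis using assms by simp
  qed
  ultimately have "\<bar>sin x - x\<bar> \<le> 4 * x / 6" by (simp add: fact_numeral)
  thus ?thesis using abs_ge_minus_self[of "sin x - x"] by linarith
qed

lemma norm_w1: assumes "\<bar>y\<bar> \<le> 1/2"
  shows "2 * \<bar>y\<bar> \<le> norm (exp (\<i> * of_real (2 * pi * y)) - 1)"
proof -
  have e: "exp (\<i> * of_real (2 * pi * y)) = cis (2*pi*y)"
    by (simp add: cis_conv_exp)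
  have "norm (exp (\<i> * of_real (2 * pi * y)) - 1) = sqrt ((cos (2*pi*y) - 1)\<^sup>2 + (sin (2*pi*y))\<^sup>2)"
    unfolding e by (simp add: norm_complex_def)
  also have "(cos (2*pi*y) - 1)\<^sup>2 + (sin (2*pi*y))\<^sup>2 = (2 * sin (pi * y))\<^sup>2"
  proof -
    have "cos (2*pi*y) = 1 - 2 * (sin (pi*y))\<^sup>2" using cos_double_sin[of "pi*y"] by (simp add: mult.assoc)
    moreover have "(sin (2*pi*y))\<^sup>2 = 1 - (cos (2*pi*y))\<^sup>2" by (simp add: sin_squared_eq)
    ultimately show ?thesis by (simp add: power2_eq_square algebra_simps)
  qed
  also have "sqrt ((2 * sin (pi * y))\<^sup>2) = 2 * \<bar>sin (pi * \<bar>y\<bar>)\<bar>"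
  proof -
    have "sqrt ((2 * sin (pi * y))\<^sup>2) = 2 * \<bar>sin (pi * y)\<bar>" by (simp only: real_sqrt_abs abs_mult)
    moreover have "\<bar>sin (pi * y)\<bar> = \<bar>sin (pi * \<bar>y\<bar>)\<bar>"
      by (cases "y \<ge> 0") (auto simp: abs_if)
    ultimately show ?thesis by simp
  qed
  finally have eq: "norm (exp (\<i> * of_real (2 * pi * y)) - 1) = 2 * \<bar>sin (pi * \<bar>y\<bar>)\<bar>" .
  have "pi * \<bar>y\<bar> \<le> pi * (1/2)" using assms by (intro mult_left_mono) auto
  hence "pi * \<bar>y\<bar> \<le> 2" using pi_less_4 by linarith
  hence "pi * \<bar>y\<bar> / 3 \<le> sin (pi * \<bar>y\<bar>)" by (intro sin_lb) auto
  moreover have "\<bar>y\<bar> \<le> pi * \<bar>y\<bar> / 3"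
  proof -
    have "3 * \<bar>y\<bar> \<le> pi * \<bar>y\<bar>" using pi_gt3 by (intro mult_right_mono) auto
    thus ?thesis by simp
  qed
  ultimately show ?thesis unfolding eq by linarith
qed

lemma G_sum_eq:
  "(\<Sum>a\<in>{1..int n - 1}. E a y) = (\<Sum>k\<in>{1..n-1}. (exp (\<i> * of_real (2 * pi * y))) ^ k)"
proof -
  have im: "{1..int n - 1} = int ` {1..n-1}"
  proof
    show "{1..int n - 1} \<subseteq> int ` {1..n-1}"
    proof
      fix x assume "x \<in> {1..int n - 1}"
      hence "nat x \<in> {1..n-1}" "x = int (nat x)" by auto
      thus "x \<in> int ` {1..n-1}" by blast
    qed
  qed auto
  have "(\<Sum>a\<in>{1..int n - 1}. E a y) = (\<Sum>k\<in>{1..n-1}. E (int k) y)"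
    unfolding im by (subst sum.reindex) auto
  also have "\<dots> = (\<Sum>k\<in>{1..n-1}. (exp (\<i> * of_real (2 * pi * y))) ^ k)"
  proof (rule sum.cong[OF refl])
    fix k assume "k \<in> {1..n-1}"
    have "E (int k) y = exp (of_nat k * (\<i> * of_real (2 * pi * y)))"
      unfolding E_def by (simp add: mult_ac)
    thus "E (int k) y = (exp (\<i> * of_real (2 * pi * y))) ^ k" by (simp add: exp_of_nat_mult)
  qed
  finally show ?thesis .
qed

lemma G_triv: "u {1..int n - 1} y \<le> real n"
proof -
  have "u {1..int n - 1} y \<le> (\<Sum>a\<in>{1..int n - 1}. norm (E a y))"
    unfolding u_def by (rule norm_sum)
  also have "\<dots> = real (card {1..int n - 1})" by (simp add: E_def)
  also have "\<dots> \<le> real n" by simp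
  finally show ?thesis .
qed

lemma G_dec: assumes "n \<ge> 2" "y' = y - of_int (round y)" "y' \<noteq> 0"
  shows "u {1..int n - 1} y \<le> 1 / \<bar>y'\<bar>"
proof -
  define w where "w = exp (\<i> * of_real (2 * pi * y))"
  have w': "w = exp (\<i> * of_real (2 * pi * y'))"
  proof -
    have "exp (\<i> * of_real (2 * pi * y)) = exp (\<i> * of_real (2 * pi * y') + \<i> * (of_int (round y) * (of_real pi * 2)))"
      unfolding assms(2) by (simp add: algebra_simps)
    thus ?thesis unfolding w_def by (simp only: exp_plus_2pin)
  qed
  have nw: "norm w = 1" unfolding w_def by simp
  have gp: "(1 - w) * (\<Sum>k\<in>{1..n-1}. w ^ k) = w ^ 1 - w ^ Suc (n - 1)"
    using assms(1) by (intro sum_gp_multiplied) auto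
  have "norm (w ^ 1 - w ^ Suc (n - 1)) \<le> norm (w ^ 1) + norm (w ^ Suc (n - 1))"
    by (rule norm_triangle_ineq4)
  also have "\<dots> = 2" by (simp only: norm_power nw power_one one_add_one)
  finally have A: "norm (1 - w) * u {1..int n - 1} y \<le> 2"
    unfolding u_def G_sum_eq w_def[symmetric] using gp by (metis norm_mult)
  have hy: "\<bar>y'\<bar> \<le> 1/2" using assms(2) of_int_round_abs_le[of y] by linarith
  have B: "2 * \<bar>y'\<bar> \<le> norm (1 - w)"
    using norm_w1[OF hy] unfolding w' by (simp add: norm_minus_commute)
  have yp: "\<bar>y'\<bar> > 0" using assms(3) by simp
  have "2 * \<bar>y'\<bar> * u {1..int n - 1} y \<le> norm (1 - w) * u {1..int n - 1} y"
    using B u_nonneg by (intro mult_right_mono) auto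
  hence "2 * \<bar>y'\<bar> * u {1..int n - 1} y \<le> 2" using A by linarith
  thus ?thesis using yp by (simp add: field_simps)
qed

lemma G_bound: assumes "n \<ge> 2"
  shows "u {1..int n - 1} y \<le> 2 * real n / (1 + real n * \<bar>y - of_int (round y)\<bar>)"
proof -
  define y' where "y' = y - of_int (round y)"
  have np: "real n > 0" using assms by simp
  show ?thesis
  proof (cases "real n * \<bar>y'\<bar> \<le> 1")
    case True
    have "real n = 2 * real n / 2" by simp
    also have "\<dots> \<le> 2 * real n / (1 + real n * \<bar>y'\<bar>)"
      using True np by (intro divide_left_mono) (auto intro: add_pos_nonneg)
    finally show ?thesis using G_triv[of n y] unfolding y'_def by linarith
  next
    case False
    hence yp: "\<bar>y'\<bar> > 0" using np by (cases "y' = 0") auto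
    have "1 / \<bar>y'\<bar> = 2 * real n / (2 * real n * \<bar>y'\<bar>)" using np yp by simp
    also have "\<dots> \<le> 2 * real n / (1 + real n * \<bar>y'\<bar>)"
    proof (rule divide_left_mono)
      show "1 + real n * \<bar>y'\<bar> \<le> 2 * real n * \<bar>y'\<bar>" using False by linarith
      show "0 < (2 * real n * \<bar>y'\<bar>) * (1 + real n * \<bar>y'\<bar>)" using np yp
        by (intro mult_pos_pos add_pos_nonneg) auto
    qed simp
    finally show ?thesis using G_dec[OF assms y'_def] yp unfolding y'_def by force
  qed
qed

lemma sum_reindex_le:
  fixes g :: "'b \<Rightarrow> real"
  assumes "inj_on \<phi> A" "\<phi> ` A \<subseteq> B" "finite B" "\<And>b. b \<in> B \<Longrightarrow> 0 \<le> g b"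
  shows "(\<Sum>a\<in>A. g (\<phi> a)) \<le> (\<Sum>b\<in>B. g b)"
proof -
  have "(\<Sum>a\<in>A. g (\<phi> a)) = (\<Sum>b\<in>\<phi> ` A. g b)" using assms(1) by (simp add: sum.reindex)
  also have "\<dots> \<le> (\<Sum>b\<in>B. g b)" using assms by (intro sum_mono2) auto
  finally show ?thesis .
qed

lemma dist_sum:
  fixes p N :: nat
  shows "(\<Sum>b\<le>N. 1 / (1 + real (if b \<le> p then p - b else b - p))) \<le> 2 * (\<Sum>d\<le>N. 1 / (1 + real d))"
proof -
  define g where "g d = 1 / (1 + real d)" for d :: nat
  have gnn: "0 \<le> g d" for d by (simp add: g_def)
  have gdec: "d \<le> d' \<Longrightarrow> g d' \<le> g d" for d d' by (simp add: g_def frac_le)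
  have split: "(\<Sum>b\<le>N. g (if b \<le> p then p - b else b - p)) =
     (\<Sum>b\<in>{..N} \<inter> {b. b \<le> p}. g (p - b)) + (\<Sum>b\<in>{..N} \<inter> - {b. b \<le> p}. g (b - p))"
    by (simp add: if_distrib sum.If_cases)
  define q where "q = min N p"
  have A1: "(\<Sum>b\<in>{..N} \<inter> {b. b \<le> p}. g (p - b)) \<le> (\<Sum>d\<le>N. g d)"
  proof -
    have "(\<Sum>b\<in>{..N} \<inter> {b. b \<le> p}. g (p - b)) \<le> (\<Sum>b\<in>{..N} \<inter> {b. b \<le> p}. g (q - b))"
      by (intro sum_mono gdec) (auto simp: q_def)
    also have "\<dots> \<le> (\<Sum>d\<le>N. g d)"
      by (rule sum_reindex_le) (auto simp: inj_on_def q_def gnn)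
    finally show ?thesis .
  qed
  have A2: "(\<Sum>b\<in>{..N} \<inter> - {b. b \<le> p}. g (b - p)) \<le> (\<Sum>d\<le>N. g d)"
    by (rule sum_reindex_le) (auto simp: inj_on_def gnn)
  show ?thesis using split A1 A2 unfolding g_def by linarith
qed

lemma harm_sum_bound: "(\<Sum>d\<le>N. 1 / (1 + real d)) \<le> 1 + ln (real N + 1)"
proof -
  have "(\<Sum>d\<le>N. 1 / (1 + real d)) = harm (Suc N)"
    by (simp add: harm_altdef lessThan_Suc_atMost[symmetric] field_simps)
  moreover have "harm (Suc N) - ln (real (Suc N)) \<le> harm 1 - ln (real (1::nat))"
    by (rule euler_mascheroni_sequence_decreasing) auto
  moreover have "harm 1 = (1::real)" by (simp add: harm_def)
  ultimately show ?thesis by (simp add: add.commute)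
qed

lemma aux_lin: "(A::real) \<le> B + C \<Longrightarrow> C \<le> 1 \<Longrightarrow> 0 \<le> B \<Longrightarrow> 1 + A \<le> 2 * (1 + B)"
  by (simp add: algebra_simps)

lemma harm_sum: "(\<Sum>b\<le>N. 1 / (1 + \<bar>v - real b\<bar>)) \<le> 4 * (1 + ln (real N + 1))"
proof -
  define p where "p = nat \<lfloor>v\<rfloor>"
  have pt: "1 / (1 + \<bar>v - real b\<bar>) \<le> 2 * (1 / (1 + real (if b \<le> p then p - b else b - p)))" for b
  proof -
    have d: "real (if b \<le> p then p - b else b - p) = \<bar>real b - real p\<bar>" by (auto simp: of_nat_diff)
    have "1 + \<bar>real b - real p\<bar> \<le> 2 * (1 + \<bar>v - real b\<bar>)"
    proof (cases "v \<ge> 0")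
      case True
      hence "real p = of_int \<lfloor>v\<rfloor>" by (simp add: p_def)
      moreover have "of_int \<lfloor>v\<rfloor> \<le> v" "v < of_int \<lfloor>v\<rfloor> + 1" by linarith+
      ultimately have "\<bar>v - real p\<bar> \<le> 1" by linarith
      moreover have "\<bar>real b - real p\<bar> \<le> \<bar>v - real b\<bar> + \<bar>v - real p\<bar>" by linarith
      ultimately show ?thesis using abs_ge_zero[of "v - real b"] aux_lin by blast
    next
      case False
      hence "p = 0" by (simp add: p_def)
      thus ?thesis using False by simp
    qed
    thus ?thesis unfolding d by (simp add: field_simps)
  qed
  have "(\<Sum>b\<le>N. 1 / (1 + \<bar>v - real b\<bar>)) \<le> (\<Sum>b\<le>N. 2 * (1 / (1 + real (if b \<le> p then p - b else b - p))))"
    by (intro sum_mono pt)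
  also have "\<dots> \<le> 2 * (2 * (\<Sum>d\<le>N. 1 / (1 + real d)))"
    unfolding sum_distrib_left[symmetric] using dist_sum[where N=N and p=p] by simp
  also have "\<dots> \<le> 4 * (1 + ln (real N + 1))" using harm_sum_bound[of N] by simp
  finally show ?thesis .
qed

lemma G5: assumes "n \<ge> 2" "\<bar>y\<bar> \<le> 2"
  shows "u {1..int n - 1} y \<le> (\<Sum>z\<in>{-2..2::int}. 2 * real n / (1 + real n * \<bar>y - of_int z\<bar>))"
proof -
  have r: "\<bar>of_int (round y) - y\<bar> \<le> 1/2" by (rule of_int_round_abs_le)
  have "round y \<in> {-2..2}"
  proof -
    have "of_int (round y) < (3::real)" "of_int (round y) > (-3::real)" using r assms(2) by linarith+
    hence "round y < 3" "round y > -3" by linarith+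
    thus ?thesis by auto
  qed
  hence "2 * real n / (1 + real n * \<bar>y - of_int (round y)\<bar>)
      \<le> (\<Sum>z\<in>{-2..2::int}. 2 * real n / (1 + real n * \<bar>y - of_int z\<bar>))"
    by (intro member_le_sum) auto
  thus ?thesis using G_bound[OF assms(1), of y] by linarith
qed

definition Kb :: "nat \<Rightarrow> real" where "Kb n = 160 * real n * (1 + ln (8 * real n + 1))"

lemma L4G: assumes "n \<ge> 2" "\<bar>x\<bar> \<le> 1"
  shows "(\<Sum>b\<le>8*n. u {1..int n - 1} (x - real_of_int (int b - 4 * int n) / (4 * real n))) \<le> Kb n"
proof -
  define y where "y b = x - real_of_int (int b - 4 * int n) / (4 * real n)" for b :: nat
  have np: "real n > 0" using assms by simp
  have yb: "\<bar>y b\<bar> \<le> 2" if "b \<le> 8 * n" for b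
  proof -
    have "\<bar>real_of_int (int b - 4 * int n)\<bar> \<le> 4 * real n" using that by auto
    hence "\<bar>real_of_int (int b - 4 * int n) / (4 * real n)\<bar> \<le> 1" using np by (simp add: field_simps abs_divide)
    thus ?thesis unfolding y_def using assms(2) by linarith
  qed
  have "(\<Sum>b\<le>8*n. u {1..int n - 1} (y b)) \<le> (\<Sum>b\<le>8*n. \<Sum>z\<in>{-2..2::int}. 2 * real n / (1 + real n * \<bar>y b - of_int z\<bar>))"
    by (intro sum_mono G5 assms(1) yb) auto
  also have "\<dots> = (\<Sum>z\<in>{-2..2::int}. \<Sum>b\<le>8*n. 2 * real n / (1 + real n * \<bar>y b - of_int z\<bar>))"
    by (rule sum.swap)
  also have "\<dots> \<le> (\<Sum>z\<in>{-2..2::int}. 32 * real n * (1 + ln (8 * real n + 1)))"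
  proof (rule sum_mono)
    fix z :: int assume "z \<in> {-2..2}"
    define v where "v = 4 * real n * (x - of_int z) + 4 * real n"
    have t: "2 * real n / (1 + real n * \<bar>y b - of_int z\<bar>) \<le> 8 * real n * (1 / (1 + \<bar>v - real b\<bar>))" for b
    proof -
      have e: "4 * real n * (y b - of_int z) = v - real b"
        unfolding y_def v_def using np by (simp add: field_simps)
      have "real n * \<bar>y b - of_int z\<bar> = \<bar>v - real b\<bar> / 4"
        using e[symmetric] np by (simp add: abs_mult)
      hence "2 * real n / (1 + real n * \<bar>y b - of_int z\<bar>) = 8 * real n / (4 + \<bar>v - real b\<bar>)"
        by (simp add: field_simps)
      also have "\<dots> \<le> 8 * real n / (1 + \<bar>v - real b\<bar>)"
        using np by (intro divide_left_mono) (auto intro: add_pos_nonneg mult_pos_pos)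
      finally show ?thesis by simp
    qed
    have "(\<Sum>b\<le>8*n. 2 * real n / (1 + real n * \<bar>y b - of_int z\<bar>)) \<le> (\<Sum>b\<le>8*n. 8 * real n * (1 / (1 + \<bar>v - real b\<bar>)))"
      by (intro sum_mono t)
    also have "\<dots> = 8 * real n * (\<Sum>b\<le>8*n. 1 / (1 + \<bar>v - real b\<bar>))" by (simp add: sum_distrib_left)
    also have "\<dots> \<le> 8 * real n * (4 * (1 + ln (real (8*n) + 1)))"
      using np by (intro mult_left_mono harm_sum) auto
    finally show "(\<Sum>b\<le>8*n. 2 * real n / (1 + real n * \<bar>y b - of_int z\<bar>)) \<le> 32 * real n * (1 + ln (8 * real n + 1))"
      by (simp add: algebra_simps)
  qed
  also have "\<dots> = Kb n" by (simp add: Kb_def)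
  finally show ?thesis unfolding y_def .
qed

lemma L4S: assumes "n \<ge> 2" "\<bar>x\<bar> \<le> 1"
  shows "(\<Sum>b\<le>8*n. u {c} (x - real_of_int (int b - 4 * int n) / (4 * real n))) \<le> Kb n"
proof -
  have "(\<Sum>b\<le>8*n. u {c} (x - real_of_int (int b - 4 * int n) / (4 * real n))) = real (8 * n) + 1"
    by (simp add: u_single)
  also have "\<dots> \<le> 160 * real n * 1" using assms by simp
  also have "\<dots> \<le> Kb n" unfolding Kb_def using assms by (intro mult_left_mono) auto
  finally show ?thesis .
qed

lemma Kb_nonneg: "0 \<le> Kb n" by (simp add: Kb_def)



definition Mset :: "nat \<Rightarrow> (int^4) set" where
  "Mset n = {m. (\<forall>i. 0 \<le> m $ i \<and> m $ i \<le> int n) \<and> (\<exists>i. m $ i = 0)}"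

definition kap :: "int^4 \<Rightarrow> int^4" where
  "kap m = (\<chi> i. 4 * m $ i - (\<Sum>l\<in>UNIV. m $ l))"

lemma kap_nth: "kap m $ i = 4 * m $ i - (\<Sum>l\<in>UNIV. m $ l)"
  by (simp add: kap_def)

lemma mod4_aux: "(4 * a - s) mod 4 = (- s) mod (4::int)"
proof -
  have "4 * a - s = - s + a * 4" by simp
  thus ?thesis by (simp only: mod_mult_self1)
qed

lemma kap_inj: "inj_on kap (Mset n)"
proof (rule inj_onI)
  fix m m' assume m: "m \<in> Mset n" and m': "m' \<in> Mset n" and e: "kap m = kap m'"
  define s where "s = (\<Sum>l\<in>UNIV. m $ l)"
  define s' where "s' = (\<Sum>l\<in>UNIV. m' $ l)"
  have ei: "4 * m $ i - s = 4 * m' $ i - s'" for i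
    using arg_cong[OF e, of "\<lambda>v. v $ i"] by (simp add: kap_nth s_def s'_def)
  obtain i0 where i0: "m $ i0 = 0" using m by (auto simp: Mset_def)
  obtain i1 where i1: "m' $ i1 = 0" using m' by (auto simp: Mset_def)
  have "m' $ i0 \<ge> 0" "m $ i1 \<ge> 0" using m m' by (auto simp: Mset_def)
  hence "s' - s \<ge> 0" "s - s' \<ge> 0" using ei[of i0] i0 ei[of i1] i1 by linarith+
  hence "s = s'" by simp
  thus "m = m'" using ei by (simp add: vec_eq_iff)
qed

lemma kap_in: assumes "m \<in> Mset n" shows "kap m \<in> Hstar n"
proof -
  define s where "s = (\<Sum>l\<in>UNIV. m $ l)"
  have "(\<Sum>i\<in>UNIV. kap m $ i) = (\<Sum>i\<in>UNIV. 4 * m $ i) - (\<Sum>i\<in>(UNIV::4 set). s)"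
    by (simp add: kap_nth s_def sum_subtractf)
  also have "\<dots> = 0" by (simp add: s_def sum_distrib_left[symmetric])
  finally have s0: "(\<Sum>i\<in>UNIV. kap m $ i) = 0" .
  have md: "kap m $ i mod 4 = kap m $ j mod 4" for i j
    by (simp add: kap_nth mod4_aux)
  have "- 4 * int n \<le> kap m $ i - kap m $ j \<and> kap m $ i - kap m $ j \<le> 4 * int n" for i j
  proof -
    have "0 \<le> m $ i" "m $ i \<le> int n" "0 \<le> m $ j" "m $ j \<le> int n" using assms by (auto simp: Mset_def)
    moreover have "kap m $ i - kap m $ j = 4 * m $ i - 4 * m $ j" by (simp add: kap_nth algebra_simps)
    ultimately show ?thesis by linarith
  qed
  thus ?thesis using s0 md by (auto simp: Hstar_def Hlat_def)
qed

lemma kap_surj: assumes "k \<in> Hstar n" shows "k \<in> kap ` Mset n"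
proof -
  define mu where "mu = Min (range (\<lambda>i. k $ i))"
  have "mu \<in> range (\<lambda>i. k $ i)" unfolding mu_def by (intro Min_in) auto
  then obtain i1 where i1: "k $ i1 = mu" by auto
  have le: "mu \<le> k $ i" for i unfolding mu_def by (intro Min_le) auto
  have dv: "4 dvd (k $ i - mu)" for i
  proof -
    have "k $ i mod 4 = k $ i1 mod 4" using assms by (auto simp: Hstar_def Hlat_def)
    thus ?thesis using i1 by (simp add: mod_eq_dvd_iff)
  qed
  define m where "m = (\<chi> i. (k $ i - mu) div 4)"
  have m4: "4 * m $ i = k $ i - mu" for i using dv[of i] by (simp add: m_def)
  have "4 * (\<Sum>l\<in>UNIV. m $ l) = (\<Sum>l\<in>UNIV. k $ l - mu)" by (simp add: sum_distrib_left m4)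
  also have "\<dots> = - 4 * mu" using assms by (simp add: sum_subtractf Hstar_def Hlat_def)
  finally have sm: "(\<Sum>l\<in>UNIV. m $ l) = - mu" by simp
  have "kap m = k" by (simp add: vec_eq_iff kap_nth sm m4)
  moreover have "m \<in> Mset n"
  proof -
    have "0 \<le> m $ i \<and> m $ i \<le> int n" for i
      using m4[of i] le[of i] Hstar_pair[OF assms, of i i1] i1 by auto
    moreover have "m $ i1 = 0" using m4[of i1] i1 by simp
    ultimately show ?thesis by (auto simp: Mset_def)
  qed
  ultimately show ?thesis by blast
qed

lemma kap_bij: "bij_betw kap (Mset n) (Hstar n)"
  using kap_inj kap_in kap_surj by (auto simp: bij_betw_def)

lemma phi_kap: assumes "(\<Sum>i\<in>UNIV. s $ i) = 0"
  shows "phi (kap m) s = (\<Prod>i\<in>UNIV. E (m $ i) (s $ i))"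
proof -
  define sg where "sg = (\<Sum>l\<in>UNIV. m $ l)"
  have "(\<Sum>i\<in>UNIV. real_of_int (kap m $ i) * s $ i)
      = (\<Sum>i\<in>UNIV. 4 * (real_of_int (m $ i) * s $ i)) - real_of_int sg * (\<Sum>i\<in>UNIV. s $ i)"
    by (simp add: kap_nth sg_def[symmetric] algebra_simps sum_subtractf sum_distrib_left)
  also have "\<dots> = (\<Sum>i\<in>UNIV. 4 * (real_of_int (m $ i) * s $ i))" using assms by simp
  finally have e: "pi / 2 * (\<Sum>i\<in>UNIV. real_of_int (kap m $ i) * s $ i)
      = (\<Sum>i\<in>UNIV. 2 * pi * real_of_int (m $ i) * s $ i)"
    by (simp add: sum_distrib_left algebra_simps)
  have "phi (kap m) s = exp (\<Sum>i\<in>UNIV. \<i> * of_real (2 * pi * real_of_int (m $ i) * s $ i))"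
    unfolding phi_def e by (simp add: sum_distrib_left)
  also have "\<dots> = (\<Prod>i\<in>UNIV. E (m $ i) (s $ i))" by (simp add: exp_sum E_def)
  finally show ?thesis .
qed

definition Wf :: "4 set \<times> 4 set \<Rightarrow> real" where
  "Wf y = (if fst y = {} then 1 else 1 / real ((card (fst y) + card (snd y)) choose card (fst y)))"

definition gM :: "nat \<Rightarrow> int^4 \<Rightarrow> 4 set \<times> 4 set" where
  "gM n m = ({i. m $ i = int n}, {i. m $ i = 0})"

lemma Wf_bound: "\<bar>Wf y\<bar> \<le> 1"
proof -
  have "1 / real x \<le> 1" for x :: nat by (cases x) auto
  thus ?thesis by (simp add: Wf_def)
qed

lemma cstar_kap: assumes "m \<in> Mset n" "n \<ge> 1"
  shows "cstar n (kap m) = Wf (gM n m)"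
proof -
  define sg where "sg = (\<Sum>l\<in>UNIV. m $ l)"
  have kn: "kap m $ i = 4 * m $ i - sg" for i by (simp add: kap_nth sg_def)
  have b: "0 \<le> m $ i" "m $ i \<le> int n" for i using assms by (auto simp: Mset_def)
  obtain i0 where i0: "m $ i0 = 0" using assms by (auto simp: Mset_def)
  show ?thesis
  proof (cases "\<exists>i. m $ i = int n")
    case True
    then obtain ia where ia: "m $ ia = int n" by auto
    have "kap m $ ia = 4 * int n - sg" by (simp add: kn ia)
    hence r1: "4 * int n - sg \<in> range (\<lambda>i. kap m $ i)" by (metis rangeI)
    have "kap m $ i0 = - sg" by (simp add: kn i0)
    hence r2: "- sg \<in> range (\<lambda>i. kap m $ i)" by (metis rangeI)
    have ub: "\<forall>z\<in>range (\<lambda>i. kap m $ i). z \<le> 4 * int n - sg" using b(2) by (auto simp: kn)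
    have lb: "\<forall>z\<in>range (\<lambda>i. kap m $ i). - sg \<le> z" using b(1) by (auto simp: kn)
    have mx: "Max (range (\<lambda>i. kap m $ i)) = 4 * int n - sg"
      by (rule Max_eqI) (use r1 ub in auto)
    have mn: "Min (range (\<lambda>i. kap m $ i)) = - sg"
      by (rule Min_eqI) (use r2 lb in auto)
    have P: "{i. kap m $ i = 4 * int n - sg} = {i. m $ i = int n}" by (auto simp: kn)
    have Q: "{i. kap m $ i = - sg} = {i. m $ i = 0}" by (auto simp: kn)
    have ne: "{i. m $ i = int n} \<noteq> {}" using ia by auto
    show ?thesis unfolding cstar_def Let_def mx mn P Q using ne
      by (simp add: Wf_def gM_def)
  next
    case False
    have "Max (range (\<lambda>i. kap m $ i)) \<in> range (\<lambda>i. kap m $ i)" by (intro Max_in) auto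
    then obtain a where a: "Max (range (\<lambda>i. kap m $ i)) = kap m $ a" by (metis rangeE)
    have "Min (range (\<lambda>i. kap m $ i)) \<in> range (\<lambda>i. kap m $ i)" by (intro Min_in) auto
    then obtain c where c: "Min (range (\<lambda>i. kap m $ i)) = kap m $ c" by (metis rangeE)
    have "m $ a \<noteq> int n" using False by blast
    hence "m $ a \<le> int n - 1" using b[of a] by linarith
    hence lt: "kap m $ a - kap m $ c < 4 * int n" using b[of c] by (simp add: kn)
    have e: "{i. m $ i = int n} = {}" using False by auto
    show ?thesis unfolding cstar_def Let_def a c using lt e by (simp add: Wf_def gM_def)
  qed
qed

definition Sc :: "nat \<Rightarrow> 4 set \<times> 4 set \<Rightarrow> 4 \<Rightarrow> int set" where
  "Sc n y i = (if i \<in> snd y then {0} else if i \<in> fst y then {int n} else {1..int n - 1})"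

lemma fiber: assumes "n \<ge> 2" "y \<in> gM n ` Mset n"
  shows "{m \<in> Mset n. gM n m = y} = {m. \<forall>i. m $ i \<in> Sc n y i}"
proof -
  obtain m0 where m0: "m0 \<in> Mset n" "y = gM n m0" using assms by auto
  have Qne: "snd y \<noteq> {}" using m0 by (auto simp: gM_def Mset_def)
  have disj: "fst y \<inter> snd y = {}" using m0 assms by (auto simp: gM_def)
  show ?thesis
  proof (intro equalityI subsetI)
    fix m assume "m \<in> {m \<in> Mset n. gM n m = y}"
    hence m: "m \<in> Mset n" "gM n m = y" by auto
    have "m $ i \<in> Sc n y i" for i
    proof -
      have b: "0 \<le> m $ i" "m $ i \<le> int n" using m(1) by (auto simp: Mset_def)
      show ?thesis unfolding Sc_def m(2)[symmetric] gM_def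
        by (cases "m $ i = 0"; cases "m $ i = int n") (use b in auto)
    qed
    thus "m \<in> {m. \<forall>i. m $ i \<in> Sc n y i}" by auto
  next
    fix m assume "m \<in> {m. \<forall>i. m $ i \<in> Sc n y i}"
    hence m: "\<And>i. m $ i \<in> Sc n y i" by auto
    have "m \<in> Mset n"
    proof -
      have "0 \<le> m $ i \<and> m $ i \<le> int n" for i using m[of i] by (auto simp: Sc_def split: if_splits)
      moreover obtain q where "q \<in> snd y" using Qne by auto
      hence "m $ q = 0" using m[of q] by (simp add: Sc_def)
      ultimately show ?thesis by (auto simp: Mset_def)
    qed
    moreover have "gM n m = y"
    proof -
      have e1: "m $ i = int n \<longleftrightarrow> i \<in> fst y" for i
      proof -
        have mi: "m $ i \<in> Sc n y i" by (rule m)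
        show ?thesis
        proof (cases "i \<in> snd y")
          case True thus ?thesis using mi disj assms(1) by (auto simp: Sc_def)
        next
          case False thus ?thesis using mi assms(1) by (auto simp: Sc_def split: if_splits)
        qed
      qed
      have e2: "m $ i = 0 \<longleftrightarrow> i \<in> snd y" for i
      proof -
        have mi: "m $ i \<in> Sc n y i" by (rule m)
        show ?thesis
        proof (cases "i \<in> snd y")
          case True thus ?thesis using mi by (auto simp: Sc_def)
        next
          case False thus ?thesis using mi assms(1) by (auto simp: Sc_def split: if_splits)
        qed
      qed
      have "{i. m $ i = int n} = fst y" using e1 by auto
      moreover have "{i. m $ i = 0} = snd y" using e2 by auto
      ultimately show ?thesis by (simp add: gM_def prod_eq_iff)
    qed
    ultimately show "m \<in> {m \<in> Mset n. gM n m = y}" by auto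
  qed
qed

lemma vec_PiE_bij: "bij_betw vec_lambda (PiE UNIV S) {m. \<forall>i. m $ i \<in> S i}"
proof (rule bij_betw_imageI)
  show "inj_on vec_lambda (PiE UNIV S)" by (auto simp: inj_on_def vec_lambda_inject)
  show "vec_lambda ` PiE UNIV S = {m. \<forall>i. m $ i \<in> S i}"
  proof (intro equalityI subsetI)
    fix m assume "m \<in> {m. \<forall>i. m $ i \<in> S i}"
    hence "vec_nth m \<in> PiE UNIV S" by auto
    thus "m \<in> vec_lambda ` PiE UNIV S" by (metis image_eqI vec_nth_inverse)
  qed auto
qed

lemma vec_set_finite: assumes "\<And>i. finite (S i)" shows "finite {m::('a,'n::finite) vec. \<forall>i. m $ i \<in> S i}"
  using bij_betw_finite[OF vec_PiE_bij[where S=S]] assms by (auto intro: finite_PiE)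

lemma vec_prod_sum:
  fixes f :: "'n::finite \<Rightarrow> 'a \<Rightarrow> 'c::comm_semiring_1"
  assumes "\<And>i. finite (S i)"
  shows "(\<Sum>m\<in>{m::('a,'n) vec. \<forall>i. m $ i \<in> S i}. \<Prod>i\<in>UNIV. f i (m $ i)) = (\<Prod>i\<in>UNIV. \<Sum>a\<in>S i. f i a)"
proof -
  have "(\<Prod>i\<in>UNIV. \<Sum>a\<in>S i. f i a) = (\<Sum>g\<in>PiE UNIV S. \<Prod>i\<in>UNIV. f i (g i))"
    using assms by (intro prod_sum_PiE) auto
  also have "\<dots> = (\<Sum>m\<in>{m::('a,'n) vec. \<forall>i. m $ i \<in> S i}. \<Prod>i\<in>UNIV. f i (m $ i))"
    using sum.reindex_bij_betw[OF vec_PiE_bij[where S=S], where g="\<lambda>m. \<Prod>i\<in>UNIV. f i (m $ i)"] by simp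
  finally show ?thesis by simp
qed



definition Pairs0 :: "(4 set \<times> 4 set) set" where "Pairs0 = {y. snd y \<noteq> {}}"

lemma finite_Pairs0: "finite Pairs0" by simp

lemma Mset_finite: "finite (Mset n)"
proof -
  have "Mset n \<subseteq> {m::int^4. \<forall>i. m $ i \<in> {0..int n}}" by (auto simp: Mset_def)
  moreover have "finite {m::int^4. \<forall>i. m $ i \<in> {0..int n}}" by (rule vec_set_finite) auto
  ultimately show ?thesis by (rule finite_subset)
qed

lemma kernel: assumes "n \<ge> 2" "(\<Sum>i\<in>UNIV. s $ i) = 0"
  shows "norm (\<Sum>k\<in>Hstar n. of_real (cstar n k) * phi k s) \<le> (\<Sum>y\<in>Pairs0. \<Prod>i\<in>UNIV. u (Sc n y i) (s $ i))"
proof -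
  define F where "F m = of_real (Wf (gM n m)) * (\<Prod>i\<in>UNIV. E (m $ i) (s $ i))" for m
  have "(\<Sum>k\<in>Hstar n. of_real (cstar n k) * phi k s) = (\<Sum>m\<in>Mset n. of_real (cstar n (kap m)) * phi (kap m) s)"
    by (rule sum.reindex_bij_betw[OF kap_bij, symmetric])
  also have "\<dots> = (\<Sum>m\<in>Mset n. F m)"
    using assms by (intro sum.cong refl) (simp add: F_def cstar_kap phi_kap)
  also have "\<dots> = (\<Sum>y\<in>gM n ` Mset n. \<Sum>m\<in>{m \<in> Mset n. gM n m = y}. F m)"
    by (rule sum.image_gen[OF Mset_finite])
  also have "\<dots> = (\<Sum>y\<in>gM n ` Mset n. of_real (Wf y) * (\<Prod>i\<in>UNIV. \<Sum>a\<in>Sc n y i. E a (s $ i)))"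
  proof (rule sum.cong[OF refl])
    fix y assume y: "y \<in> gM n ` Mset n"
    have "(\<Sum>m\<in>{m \<in> Mset n. gM n m = y}. F m) = (\<Sum>m\<in>{m \<in> Mset n. gM n m = y}. of_real (Wf y) * (\<Prod>i\<in>UNIV. E (m $ i) (s $ i)))"
      by (intro sum.cong refl) (auto simp: F_def)
    also have "\<dots> = (\<Sum>m\<in>{m. \<forall>i. m $ i \<in> Sc n y i}. of_real (Wf y) * (\<Prod>i\<in>UNIV. E (m $ i) (s $ i)))"
      unfolding fiber[OF assms(1) y] ..
    also have "\<dots> = of_real (Wf y) * (\<Prod>i\<in>UNIV. \<Sum>a\<in>Sc n y i. E a (s $ i))"
      by (subst vec_prod_sum[symmetric]) (auto simp: Sc_def sum_distrib_left)
    finally show "(\<Sum>m\<in>{m \<in> Mset n. gM n m = y}. F m) = of_real (Wf y) * (\<Prod>i\<in>UNIV. \<Sum>a\<in>Sc n y i. E a (s $ i))" .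
  qed
  finally have eq: "(\<Sum>k\<in>Hstar n. of_real (cstar n k) * phi k s) = (\<Sum>y\<in>gM n ` Mset n. of_real (Wf y) * (\<Prod>i\<in>UNIV. \<Sum>a\<in>Sc n y i. E a (s $ i)))" .
  have "norm (\<Sum>y\<in>gM n ` Mset n. of_real (Wf y) * (\<Prod>i\<in>UNIV. \<Sum>a\<in>Sc n y i. E a (s $ i)))
      \<le> (\<Sum>y\<in>gM n ` Mset n. norm (of_real (Wf y) * (\<Prod>i\<in>UNIV. \<Sum>a\<in>Sc n y i. E a (s $ i))))"
    by (rule norm_sum)
  also have "\<dots> \<le> (\<Sum>y\<in>gM n ` Mset n. \<Prod>i\<in>UNIV. u (Sc n y i) (s $ i))"
  proof (rule sum_mono)
    fix y
    have "norm (of_real (Wf y) * (\<Prod>i\<in>UNIV. \<Sum>a\<in>Sc n y i. E a (s $ i))) = \<bar>Wf y\<bar> * (\<Prod>i\<in>UNIV. u (Sc n y i) (s $ i))"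
      by (simp add: norm_mult prod_norm[symmetric] u_def)
    also have "\<dots> \<le> 1 * (\<Prod>i\<in>UNIV. u (Sc n y i) (s $ i))"
      using Wf_bound by (intro mult_right_mono prod_nonneg) (auto simp: u_nonneg)
    finally show "norm (of_real (Wf y) * (\<Prod>i\<in>UNIV. \<Sum>a\<in>Sc n y i. E a (s $ i))) \<le> (\<Prod>i\<in>UNIV. u (Sc n y i) (s $ i))" by simp
  qed
  also have "\<dots> \<le> (\<Sum>y\<in>Pairs0. \<Prod>i\<in>UNIV. u (Sc n y i) (s $ i))"
  proof (rule sum_mono2[OF finite_Pairs0])
    show "gM n ` Mset n \<subseteq> Pairs0" by (auto simp: gM_def Mset_def Pairs0_def)
  qed (auto intro: prod_nonneg u_nonneg)
  finally show ?thesis unfolding eq .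
qed



lemma grid_sum:
  fixes v :: "4 \<Rightarrow> int \<Rightarrow> real"
  assumes nn: "\<And>i a. 0 \<le> v i a"
  shows "(\<Sum>j\<in>Hstar n. \<Prod>i\<in>UNIV-{i0}. v i (j $ i)) \<le> (\<Prod>i\<in>UNIV-{i0}. \<Sum>b\<le>8*n. v i (int b - 4 * int n))"
proof -
  define I where "I = (UNIV::4 set) - {i0}"
  define rho where "rho j = restrict (\<lambda>i. nat (j $ i + 4 * int n)) I" for j :: "int^4"
  have jb: "j $ i + 4 * int n \<ge> 0" "j $ i + 4 * int n \<le> 8 * int n" if "j \<in> Hstar n" for j i
    using Hstar_bound[OF that, of i] by auto
  have "(\<Sum>j\<in>Hstar n. \<Prod>i\<in>I. v i (j $ i)) = (\<Sum>j\<in>Hstar n. \<Prod>i\<in>I. v i (int (rho j i) - 4 * int n))"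
    by (intro sum.cong prod.cong refl) (auto simp: rho_def I_def jb)
  also have "\<dots> \<le> (\<Sum>g\<in>PiE I (\<lambda>_. {..8*n}). \<Prod>i\<in>I. v i (int (g i) - 4 * int n))"
  proof (rule sum_reindex_le[where g="\<lambda>g. \<Prod>i\<in>I. v i (int (g i) - 4 * int n)"])
    show "inj_on rho (Hstar n)"
    proof (rule inj_onI)
      fix j j' assume j: "j \<in> Hstar n" and j': "j' \<in> Hstar n" and e: "rho j = rho j'"
      have eI: "j $ i = j' $ i" if "i \<in> I" for i
      proof -
        have "nat (j $ i + 4 * int n) = nat (j' $ i + 4 * int n)"
          using fun_cong[OF e, of i] that by (simp add: rho_def)
        thus ?thesis using jb[OF j, of i] jb[OF j', of i] by simp
      qed
      have s: "(\<Sum>i\<in>UNIV. j $ i) = 0" "(\<Sum>i\<in>UNIV. j' $ i) = 0"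
        using j j' by (auto simp: Hstar_def Hlat_def)
      have "(\<Sum>i\<in>UNIV. j $ i) = j $ i0 + (\<Sum>i\<in>I. j $ i)" unfolding I_def
        by (simp add: sum.remove[of UNIV i0])
      moreover have "(\<Sum>i\<in>UNIV. j' $ i) = j' $ i0 + (\<Sum>i\<in>I. j' $ i)" unfolding I_def
        by (simp add: sum.remove[of UNIV i0])
      moreover have "(\<Sum>i\<in>I. j $ i) = (\<Sum>i\<in>I. j' $ i)" using eI by (intro sum.cong) auto
      ultimately have "j $ i0 = j' $ i0" using s by simp
      hence "j $ i = j' $ i" for i using eI by (cases "i = i0") (auto simp: I_def)
      thus "j = j'" by (simp add: vec_eq_iff)
    qed
    show "rho ` Hstar n \<subseteq> PiE I (\<lambda>_. {..8*n})"
      using jb by (auto simp: rho_def nat_le_iff)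
  qed (auto intro: prod_nonneg nn finite_PiE)
  also have "\<dots> = (\<Prod>i\<in>I. \<Sum>b\<le>8*n. v i (int b - 4 * int n))"
    by (rule prod_sum_PiE[symmetric]) auto
  finally show ?thesis unfolding I_def .
qed

lemma ln2_ge: "1/2 \<le> ln (2::real)"
proof -
  have "exp (1/2::real) ^ 2 = exp 1" using exp_of_nat_mult[of 2 "1/2::real"] by simp
  hence "exp (1/2::real) ^ 2 \<le> 2 ^ 2" using exp_le by simp
  hence "exp (1/2::real) \<le> 2" by (rule power2_le_imp_le) simp
  hence "ln (exp (1/2::real)) \<le> ln 2" by (subst ln_le_cancel_iff) auto
  thus ?thesis by simp
qed

lemma Kb_le: assumes "n \<ge> 2" shows "Kb n \<le> 1120 * real n * ln (real n)"
proof -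
  have n2: "real n \<ge> 2" using assms by simp
  have "2 ^ 4 \<le> real n ^ 4" using n2 by (intro power_mono) auto
  hence "real n * 16 \<le> real n * real n ^ 4" using n2 by (intro mult_left_mono) auto
  moreover have "real n ^ 5 = real n * real n ^ 4" by (simp add: power_Suc[symmetric])
  ultimately have "8 * real n + 1 \<le> real n ^ 5" using n2 by linarith
  hence "ln (8 * real n + 1) \<le> ln (real n ^ 5)" using n2 by (subst ln_le_cancel_iff) auto
  also have "\<dots> = 5 * ln (real n)" using n2 by (simp add: ln_realpow)
  finally have a: "ln (8 * real n + 1) \<le> 5 * ln (real n)" .
  have "ln 2 \<le> ln (real n)" using n2 by (subst ln_le_cancel_iff) auto
  hence "1 \<le> 2 * ln (real n)" using ln2_ge by linarith
  hence "1 + ln (8 * real n + 1) \<le> 7 * ln (real n)" using a by linarith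
  hence "160 * real n * (1 + ln (8 * real n + 1)) \<le> 160 * real n * (7 * ln (real n))"
    using n2 by (intro mult_left_mono) auto
  thus ?thesis by (simp add: Kb_def)
qed



lemma sumT: assumes n: "n \<ge> 2" and t: "t \<in> CL"
  shows "(\<Sum>j\<in>Hstar n. \<Sum>y\<in>Pairs0. \<Prod>i\<in>UNIV. u (Sc n y i) ((t - gridpt n j) $ i)) \<le> real (card Pairs0) * Kb n ^ 3"
proof -
  have "(\<Sum>j\<in>Hstar n. \<Sum>y\<in>Pairs0. \<Prod>i\<in>UNIV. u (Sc n y i) ((t - gridpt n j) $ i))
      = (\<Sum>y\<in>Pairs0. \<Sum>j\<in>Hstar n. \<Prod>i\<in>UNIV. u (Sc n y i) ((t - gridpt n j) $ i))"
    by (rule sum.swap)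
  also have "\<dots> \<le> (\<Sum>y\<in>Pairs0. Kb n ^ 3)"
  proof (rule sum_mono)
    fix y assume y: "y \<in> Pairs0"
    then obtain i0 where i0: "i0 \<in> snd y" by (auto simp: Pairs0_def)
    define v where "v i a = u (Sc n y i) (t $ i - real_of_int a / (4 * real n))" for i a
    have "(\<Sum>j\<in>Hstar n. \<Prod>i\<in>UNIV. u (Sc n y i) ((t - gridpt n j) $ i))
        = (\<Sum>j\<in>Hstar n. \<Prod>i\<in>UNIV-{i0}. v i (j $ i))"
    proof (rule sum.cong[OF refl])
      fix j
      have "(\<Prod>i\<in>UNIV. u (Sc n y i) ((t - gridpt n j) $ i)) = (\<Prod>i\<in>UNIV. v i (j $ i))"
        by (simp add: v_def gridpt_def)
      also have "\<dots> = v i0 (j $ i0) * (\<Prod>i\<in>UNIV-{i0}. v i (j $ i))"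
        by (simp add: prod.remove[of UNIV i0])
      also have "v i0 (j $ i0) = 1" using i0 by (simp add: v_def Sc_def u_single)
      finally show "(\<Prod>i\<in>UNIV. u (Sc n y i) ((t - gridpt n j) $ i)) = (\<Prod>i\<in>UNIV-{i0}. v i (j $ i))" by simp
    qed
    also have "\<dots> \<le> (\<Prod>i\<in>UNIV-{i0}. \<Sum>b\<le>8*n. v i (int b - 4 * int n))"
      by (rule grid_sum) (simp add: v_def u_nonneg)
    also have "\<dots> \<le> (\<Prod>i\<in>UNIV-{i0}. Kb n)"
    proof (rule prod_mono)
      fix i
      have x: "\<bar>t $ i\<bar> \<le> 1" by (rule CL_bound[OF t])
      have "(\<Sum>b\<le>8*n. v i (int b - 4 * int n)) \<le> Kb n"
        unfolding v_def Sc_def using L4S[OF n x] L4G[OF n x] by auto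
      thus "0 \<le> (\<Sum>b\<le>8*n. v i (int b - 4 * int n)) \<and> (\<Sum>b\<le>8*n. v i (int b - 4 * int n)) \<le> Kb n"
        by (auto intro: sum_nonneg simp: v_def u_nonneg)
    qed
    also have "\<dots> = Kb n ^ 3" by (simp add: card_Diff_singleton)
    finally show "(\<Sum>j\<in>Hstar n. \<Prod>i\<in>UNIV. u (Sc n y i) ((t - gridpt n j) $ i)) \<le> Kb n ^ 3" .
  qed
  also have "\<dots> = real (card Pairs0) * Kb n ^ 3" by simp
  finally show ?thesis .
qed

lemma bounded_CL: "bounded CL"
proof -
  have "norm t \<le> 4" if "t \<in> CL" for t
  proof -
    have "norm t \<le> (\<Sum>i\<in>UNIV. \<bar>t $ i\<bar>)" by (rule norm_le_l1_cart)
    also have "\<dots> \<le> (\<Sum>i\<in>(UNIV::4 set). 1)" using CL_bound[OF that] by (intro sum_mono) auto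
    finally show ?thesis by simp
  qed
  thus ?thesis unfolding bounded_iff by blast
qed

theorem theorem3p19:
  shows "\<exists>c::real. \<forall>n::nat. n \<ge> 2 \<longrightarrow>
     (\<forall>f::real^4 \<Rightarrow> complex. continuous_on (closure OmegaH) f \<longrightarrow>
        (\<forall>t\<in>closure OmegaH.
           norm (Istar n f t) \<le> c * (ln (real n)) ^ 3 * (SUP x\<in>closure OmegaH. norm (f x))))"
proof (intro exI[of _ "real (card Pairs0) * 1120 ^ 3 / 4"] allI impI ballI)
  fix n :: nat and f :: "real^4 \<Rightarrow> complex" and t
  assume n: "n \<ge> 2" and fc: "continuous_on (closure OmegaH) f" and tc: "t \<in> closure OmegaH"
  define C0 where "C0 = real (card Pairs0) * 1120 ^ 3 / (4::real)"
  define F where "F = (SUP x\<in>closure OmegaH. norm (f x))"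
  have np: "real n > 0" using n by simp
  have "compact (closure OmegaH)" using bounded_subset[OF bounded_CL Omega_sub_CL] by simp
  hence "compact (f ` closure OmegaH)" by (rule compact_continuous_image[OF fc])
  then obtain a where a: "\<forall>y\<in>f ` closure OmegaH. norm y \<le> a" using compact_imp_bounded bounded_iff by metis
  have bdd: "bdd_above ((\<lambda>x. norm (f x)) ` closure OmegaH)"
    using a by (intro bdd_aboveI[of _ a]) auto
  have fb: "norm (f x) \<le> F" if "x \<in> closure OmegaH" for x
    unfolding F_def using bdd that by (rule cSUP_upper2) simp
  have "0 \<in> CL" by (simp add: CL_def)
  hence "0 \<in> closure OmegaH" using closure_eq by simp
  hence F0: "0 \<le> F" using fb[of 0] by (meson norm_ge_zero order_trans)
  have tCL: "t \<in> CL" using tc closure_eq by simp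
  have gc: "gridpt n j \<in> closure OmegaH" if "j \<in> Hstar n" for j
    using grid_CL[OF that] np closure_eq by simp
  define T where "T s = (\<Sum>y\<in>Pairs0. \<Prod>i\<in>UNIV. u (Sc n y i) (s $ i))" for s :: "real^4"
  have phib: "norm (Phistar n (t - gridpt n j)) \<le> T (t - gridpt n j) / (4 * real n ^ 3)" if "j \<in> Hstar n" for j
  proof -
    have "(\<Sum>i\<in>UNIV. (t - gridpt n j) $ i) = 0"
      using tCL grid_CL[OF that] np by (simp add: CL_def sum_subtractf)
    hence k: "norm (\<Sum>k\<in>Hstar n. of_real (cstar n k) * phi k (t - gridpt n j)) \<le> T (t - gridpt n j)"
      unfolding T_def by (intro kernel n)
    have "norm (Phistar n (t - gridpt n j)) = norm (\<Sum>k\<in>Hstar n. of_real (cstar n k) * phi k (t - gridpt n j)) / (4 * real n ^ 3)"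
      unfolding Phistar_def using np by (simp add: norm_mult norm_divide norm_power)
    thus ?thesis using k np by (simp add: divide_right_mono)
  qed
  have "norm (Istar n f t) \<le> (\<Sum>j\<in>Hstar n. norm (f (gridpt n j) * Phistar n (t - gridpt n j)))"
    unfolding Istar_def by (rule norm_sum)
  also have "\<dots> \<le> (\<Sum>j\<in>Hstar n. F * (T (t - gridpt n j) / (4 * real n ^ 3)))"
  proof (rule sum_mono)
    fix j assume j: "j \<in> Hstar n"
    show "norm (f (gridpt n j) * Phistar n (t - gridpt n j)) \<le> F * (T (t - gridpt n j) / (4 * real n ^ 3))"
      unfolding norm_mult using fb[OF gc[OF j]] phib[OF j] F0 by (intro mult_mono) auto
  qed
  also have "\<dots> = F * ((\<Sum>j\<in>Hstar n. T (t - gridpt n j)) / (4 * real n ^ 3))"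
    by (simp add: sum_distrib_left sum_divide_distrib)
  also have "\<dots> \<le> F * (real (card Pairs0) * Kb n ^ 3 / (4 * real n ^ 3))"
    using sumT[OF n tCL] F0 np unfolding T_def by (intro mult_left_mono divide_right_mono) auto
  also have "\<dots> \<le> F * (C0 * ln (real n) ^ 3)"
  proof (rule mult_left_mono[OF _ F0])
    have "Kb n ^ 3 \<le> (1120 * real n * ln (real n)) ^ 3"
      using Kb_le[OF n] Kb_nonneg by (intro power_mono) auto
    hence "real (card Pairs0) * Kb n ^ 3 \<le> real (card Pairs0) * (1120 * real n * ln (real n)) ^ 3"
      by (intro mult_left_mono) auto
    hence "real (card Pairs0) * Kb n ^ 3 / (4 * real n ^ 3) \<le> real (card Pairs0) * (1120 * real n * ln (real n)) ^ 3 / (4 * real n ^ 3)"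
      using np by (intro divide_right_mono) auto
    also have "\<dots> = C0 * ln (real n) ^ 3" using np by (simp add: C0_def power_mult_distrib field_simps)
    finally show "real (card Pairs0) * Kb n ^ 3 / (4 * real n ^ 3) \<le> C0 * ln (real n) ^ 3" .
  qed
  finally show "norm (Istar n f t) \<le> real (card Pairs0) * 1120 ^ 3 / 4 * ln (real n) ^ 3 * (SUP x\<in>closure OmegaH. norm (f x))"
    by (simp add: C0_def F_def mult_ac)
qed


end
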